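(* Let $G$ be a vertex-weighted multigraph and $H$ a submultigraph of $G$. Assume: (a) $G$ is completely multipartite; (b) $\mathrm{wt}_G(v)\geq 2$ for every vertex $v$ of $G$; (c) whenever $\{v_1,\dots,v_s\}\subset V_H$ is a set of mutually non-adjacent vertices of $H$, we have $s\leq\#V_H-4$. Then there exists a vertex-weighted multigraph $G'$, obtained from $G$ by a finite (possibly empty) sequence of admissible contractions, such that $H$ is a spanning submultigraph of $G'$.
   Context: A vertex-weighted multigraph is $G=(V,E,r,\mathrm{wt})$ with $V$ a finite vertex set, $E$ a finite edge set, $r$ assigning to each edge an unordered pair of distinct vertices, $\mathrm{wt}:V\to\mathbb{Z}$. $\deg(v)$ is the number of edges incident to $v$. $G_1$ is a submultigraph of $G_2$ if there are injective $\phi:V_1\to V_2$, $\psi:E_1\to E_2$ with $r_2\circ\psi=\phi\circ r_1$ and $\mathrm{wt}_1\leq\mathrm{wt}_2\circ\phi$; spanning if $\phi$ is bijective. $G$ is completely multipartite if there is no triple of vertices $v_1,v_2,v_3$ with $\{v_1,v_2\}$ and $\{v_1,v_3\}$ non-adjacent but $\{v_2,v_3\}$ adjacent. For adjacent $v,w$, the contraction with respect to $\{v,w\}$ identifies $v,w$ to a vertex of weight $\mathrm{wt}(v)+\mathrm{wt}(w)$, deletes edges between $v$ and $w$, and keeps all other edges and weights. With $m$ the number of edges between $v,w$, the contraction is admissible if, for some labeling of the pair as $v,w$, there is an integer $0\leq l<m$ with: every vertex $x\notin\{v,w\}$ has $\deg(x)\geq 3$; $\mathrm{wt}(v)\geq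 l+1$, $\mathrm{wt}(w)\geq l+2$; $\deg(v)-m+l\geq 3$ and $\deg(w)-m+l\geq 3$. *)

theory Defs
  imports Main
begin

text \<open>Vertex-weighted multigraph: vertex set, edge set, endpoint map r (an unordered
pair of distinct vertices, represented as a two-element set), and integer weights.\<close>

record ('v, 'e) vwmg =
  verts :: "'v set"
  edges :: "'e set"
  ends  :: "'e \<Rightarrow> 'v set"
  wt    :: "'v \<Rightarrow> int"

definition multigraph :: "('v, 'e) vwmg \<Rightarrow> bool" where
  "multigraph G \<longleftrightarrow> finite (verts G) \<and> finite (edges G) \<and>
     (\<forall>e\<in>edges G. \<exists>x y. x \<in> verts G \<and> y \<in> verts G \<and> x \<noteq> y \<and> ends G e = {x, y})"

definition deg :: "('v, 'e) vwmg \<Rightarrow> 'v \<Rightarrow> nat" where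
  "deg G v = card {e \<in> edges G. v \<in> ends G e}"

definition edges_between :: "('v, 'e) vwmg \<Rightarrow> 'v \<Rightarrow> 'v \<Rightarrow> 'e set" where
  "edges_between G v w = {e \<in> edges G. ends G e = {v, w}}"

definition adjacent :: "('v, 'e) vwmg \<Rightarrow> 'v \<Rightarrow> 'v \<Rightarrow> bool" where
  "adjacent G v w \<longleftrightarrow> edges_between G v w \<noteq> {}"

definition completely_multipartite :: "('v, 'e) vwmg \<Rightarrow> bool" where
  "completely_multipartite G \<longleftrightarrow>
     \<not> (\<exists>v1\<in>verts G. \<exists>v2\<in>verts G. \<exists>v3\<in>verts G.
          \<not> adjacent G v1 v2 \<and> \<not> adjacent G v1 v3 \<and> adjacent G v2 v3)"

definition submultigraph_via ::
  "('a, 'b) vwmg \<Rightarrow> ('v, 'e) vwmg \<Rightarrow> ('a \<Rightarrow> 'v) \<Rightarrow> ('b \<Rightarrow> 'e) \<Rightarrow> bool" where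
  "submultigraph_via H G \<phi> \<psi> \<longleftrightarrow>
     inj_on \<phi> (verts H) \<and> \<phi> ` verts H \<subseteq> verts G \<and>
     inj_on \<psi> (edges H) \<and> \<psi> ` edges H \<subseteq> edges G \<and>
     (\<forall>e\<in>edges H. ends G (\<psi> e) = \<phi> ` ends H e) \<and>
     (\<forall>v\<in>verts H. wt H v \<le> wt G (\<phi> v))"

definition submultigraph :: "('a, 'b) vwmg \<Rightarrow> ('v, 'e) vwmg \<Rightarrow> bool" where
  "submultigraph H G \<longleftrightarrow> (\<exists>\<phi> \<psi>. submultigraph_via H G \<phi> \<psi>)"

definition spanning_submultigraph :: "('a, 'b) vwmg \<Rightarrow> ('v, 'e) vwmg \<Rightarrow> bool" where
  "spanning_submultigraph H G \<longleftrightarrow>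
     (\<exists>\<phi> \<psi>. submultigraph_via H G \<phi> \<psi> \<and> bij_betw \<phi> (verts H) (verts G))"

text \<open>Contraction with respect to adjacent v, w: the identified vertex is represented
 by v (the result is defined up to isomorphism; we pick this representative).\<close>

definition contract :: "('v, 'e) vwmg \<Rightarrow> 'v \<Rightarrow> 'v \<Rightarrow> ('v, 'e) vwmg" where
  "contract G v w =
     \<lparr> verts = verts G - {w},
       edges = edges G - edges_between G v w,
       ends = (\<lambda>e. (\<lambda>x. if x = w then v else x) ` ends G e),
       wt = (\<lambda>x. if x = v then wt G v + wt G w else wt G x) \<rparr>"

definition admissible_labeled :: "('v, 'e) vwmg \<Rightarrow> 'v \<Rightarrow> 'v \<Rightarrow> bool" where
  "admissible_labeled G v w \<longleftrightarrow>
     (let m = int (card (edges_between G v w)) in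
      \<exists>l::int. 0 \<le> l \<and> l < m \<and>
        (\<forall>x\<in>verts G. x \<notin> {v, w} \<longrightarrow> deg G x \<ge> 3) \<and>
        wt G v \<ge> l + 1 \<and> wt G w \<ge> l + 2 \<and>
        int (deg G v) - m + l \<ge> 3 \<and> int (deg G w) - m + l \<ge> 3)"

definition admissible_pair :: "('v, 'e) vwmg \<Rightarrow> 'v \<Rightarrow> 'v \<Rightarrow> bool" where
  "admissible_pair G v w \<longleftrightarrow> admissible_labeled G v w \<or> admissible_labeled G w v"

definition adm_contraction :: "('v, 'e) vwmg \<Rightarrow> ('v, 'e) vwmg \<Rightarrow> bool" where
  "adm_contraction G G' \<longleftrightarrow>
     (\<exists>v\<in>verts G. \<exists>w\<in>verts G. v \<noteq> w \<and> adjacent G v w \<and> admissible_pair G v w \<and>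
        G' = contract G v w)"

definition independent_set :: "('v, 'e) vwmg \<Rightarrow> 'v set \<Rightarrow> bool" where
  "independent_set G S \<longleftrightarrow> S \<subseteq> verts G \<and> (\<forall>x\<in>S. \<forall>y\<in>S. \<not> adjacent G x y)"

end

theory Submission
  imports Defs
begin

lemma adj_sym: "adjacent G a b \<longleftrightarrow> adjacent G b a"
  unfolding adjacent_def edges_between_def by (simp add: insert_commute)

lemma eb_sym: "edges_between G a b = edges_between G b a"
  unfolding edges_between_def by (simp add: insert_commute)

lemma not_adj_self:
  assumes "multigraph G" shows "\<not> adjacent G a a"
proof
  assume "adjacent G a a"
  then obtain e where e: "e \<in> edges G" "ends G e = {a}"
    unfolding adjacent_def edges_between_def by auto
  with assms obtain x y where "x \<noteq> y" "ends G e = {x, y}" unfolding multigraph_def by blast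
  with e show False by auto
qed

lemma adj_in_verts:
  assumes "multigraph G" "adjacent G a b" shows "a \<in> verts G" "b \<in> verts G"
proof -
  obtain e where e: "e \<in> edges G" "ends G e = {a,b}"
    using assms(2) unfolding adjacent_def edges_between_def by auto
  with assms(1) obtain x y where "x \<in> verts G" "y \<in> verts G" "ends G e = {x, y}"
    unfolding multigraph_def by blast
  with e show "a \<in> verts G" "b \<in> verts G" by (auto simp: doubleton_eq_iff)
qed

lemma deg_bound:
  assumes G: "multigraph G" and N: "finite N" "z \<notin> N" "w \<notin> N"
    and adj: "\<forall>y\<in>N. adjacent G z y"
  shows "card (edges_between G z w) + card N \<le> deg G z"
proof -
  define g where "g y = (SOME e. e \<in> edges_between G z y)" for y
  have g: "g y \<in> edges_between G z y" if "y \<in> N" for y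
    using adj that unfolding g_def adjacent_def by (simp add: some_in_eq)
  have ge: "g y \<in> edges G" "ends G (g y) = {z, y}" if "y \<in> N" for y
    using g[OF that] unfolding edges_between_def by auto
  have inj: "inj_on g N"
  proof (rule inj_onI)
    fix a b assume "a \<in> N" "b \<in> N" "g a = g b"
    then have "{z,a} = {z,b}" using ge by metis
    with \<open>a \<in> N\<close> \<open>b \<in> N\<close> N show "a = b" by (auto simp: doubleton_eq_iff)
  qed
  have disj: "edges_between G z w \<inter> g ` N = {}"
  proof (rule ccontr)
    assume "edges_between G z w \<inter> g ` N \<noteq> {}"
    then obtain y where y: "y \<in> N" "g y \<in> edges_between G z w" by auto
    then have "{z,y} = {z,w}" using ge unfolding edges_between_def by auto
    with y N show False by (auto simp: doubleton_eq_iff)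
  qed
  have fin: "finite {e \<in> edges G. z \<in> ends G e}" using G unfolding multigraph_def by auto
  have sub: "edges_between G z w \<union> g ` N \<subseteq> {e \<in> edges G. z \<in> ends G e}"
    using ge unfolding edges_between_def by auto
  have "card (edges_between G z w) + card N = card (edges_between G z w \<union> g ` N)"
    using disj inj N fin sub
    by (metis (no_types, lifting) card_Un_disjoint card_image finite_Un finite_subset)
  also have "\<dots> \<le> deg G z" unfolding deg_def using card_mono[OF fin sub] .
  finally show ?thesis .
qed

lemma nbrs:
  assumes G: "multigraph G" and H: "multigraph H"
    and cm: "completely_multipartite G"
    and sv: "submultigraph_via H G \<phi> \<psi>"
    and ind: "\<forall>S. independent_set H S \<longrightarrow> int (card S) \<le> int (card (verts H)) - 4"
    and z: "z \<in> verts G"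
  shows "\<exists>T \<subseteq> verts H. card T \<ge> 4 \<and> (\<forall>a\<in>T. adjacent G z (\<phi> a))"
proof -
  define S where "S = {a \<in> verts H. \<not> adjacent G z (\<phi> a)}"
  define T where "T = {a \<in> verts H. adjacent G z (\<phi> a)}"
  have finH: "finite (verts H)" using H unfolding multigraph_def by auto
  have "independent_set H S"
    unfolding independent_set_def
  proof (intro conjI ballI)
    show "S \<subseteq> verts H" unfolding S_def by auto
    fix a b assume a: "a \<in> S" and b: "b \<in> S"
    show "\<not> adjacent H a b"
    proof
      assume "adjacent H a b"
      then obtain e where e: "e \<in> edges H" "ends H e = {a,b}"
        unfolding adjacent_def edges_between_def by auto
      then have "\<psi> e \<in> edges G" "ends G (\<psi> e) = {\<phi> a, \<phi> b}"
        using sv unfolding submultigraph_via_def by auto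
      then have "adjacent G (\<phi> a) (\<phi> b)" unfolding adjacent_def edges_between_def by auto
      moreover have "\<phi> a \<in> verts G" "\<phi> b \<in> verts G" using a b sv
        unfolding S_def submultigraph_via_def by auto
      ultimately show False using cm z a b unfolding completely_multipartite_def S_def by blast
    qed
  qed
  with ind have "int (card S) \<le> int (card (verts H)) - 4" by blast
  moreover have "card S + card T = card (verts H)"
  proof -
    have "S \<union> T = verts H" "S \<inter> T = {}" unfolding S_def T_def by auto
    with finH show ?thesis by (metis card_Un_disjoint finite_Un)
  qed
  ultimately have "card T \<ge> 4" by linarith
  moreover have "T \<subseteq> verts H" "\<forall>a\<in>T. adjacent G z (\<phi> a)" unfolding T_def by auto
  ultimately show ?thesis by blast
qed

lemma contract_simps:
  "verts (contract G v w) = verts G - {w}"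
  "edges (contract G v w) = edges G - edges_between G v w"
  "ends (contract G v w) = (\<lambda>e. (\<lambda>x. if x = w then v else x) ` ends G e)"
  "wt (contract G v w) = (\<lambda>x. if x = v then wt G v + wt G w else wt G x)"
  unfolding contract_def by simp_all

lemma img_id: "u \<notin> A \<Longrightarrow> (\<lambda>y. if y = u then x else y) ` A = A"
proof -
  assume "u \<notin> A"
  then have "(\<lambda>y. if y = u then x else y) ` A = (\<lambda>y. y) ` A" by (intro image_cong) auto
  then show ?thesis by simp
qed

lemma eb_contract:
  "e \<in> edges_between (contract G x u) a b \<longleftrightarrow>
    e \<in> edges G \<and> e \<notin> edges_between G x u \<and> (\<lambda>y. if y = u then x else y) ` ends G e = {a,b}"
proof -
  have "e \<in> edges_between (contract G x u) a b \<longleftrightarrow> e \<in> edges (contract G x u) \<and> ends (contract G x u) e = {a,b}"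
    unfolding edges_between_def[of "contract G x u"] by blast
  then show ?thesis unfolding contract_simps by blast
qed

lemma adj_contract_other:
  assumes "a \<notin> {x,u}" "b \<notin> {x,u}"
  shows "adjacent (contract G x u) a b \<longleftrightarrow> adjacent G a b"
proof
  assume "adjacent (contract G x u) a b"
  then obtain e where "e \<in> edges_between (contract G x u) a b" unfolding adjacent_def by blast
  then have e0: "e \<in> edges G \<and> e \<notin> edges_between G x u \<and> (\<lambda>y. if y = u then x else y) ` ends G e = {a,b}"
    unfolding eb_contract .
  then have e: "e \<in> edges G" "(\<lambda>y. if y = u then x else y) ` ends G e = {a,b}"
    by (rule conjunct1, rule conjunct2[THEN conjunct2])
  have "u \<notin> ends G e"
  proof
    assume "u \<in> ends G e"
    then have "x \<in> (\<lambda>y. if y = u then x else y) ` ends G e" by - (rule image_eqI[where x=u], simp, assumption)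
    then have "x \<in> {a,b}" unfolding e(2) .
    with assms show False by blast
  qed
  then have "(\<lambda>y. if y = u then x else y) ` ends G e = ends G e" by (rule img_id)
  with e have "e \<in> edges_between G a b" unfolding edges_between_def by simp
  then show "adjacent G a b" unfolding adjacent_def by blast
next
  assume "adjacent G a b"
  then obtain e where e: "e \<in> edges G" "ends G e = {a,b}"
    unfolding adjacent_def edges_between_def by blast
  have "ends G e \<noteq> {x,u}" using e(2) assms by (simp add: doubleton_eq_iff)
  then have "e \<notin> edges_between G x u" unfolding edges_between_def by blast
  moreover have "u \<notin> ends G e" using e(2) assms by auto
  then have "(\<lambda>y. if y = u then x else y) ` ends G e = {a,b}" using e(2) img_id[of u "ends G e" x] by simp
  ultimately have "e \<in> edges_between (contract G x u) a b" using e
    unfolding eb_contract by (intro conjI)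
  then show "adjacent (contract G x u) a b" unfolding adjacent_def by blast
qed

lemma adj_contract_x:
  assumes "a \<notin> {x,u}" "adjacent G x a \<or> adjacent G u a" "x \<noteq> u"
  shows "adjacent (contract G x u) x a"
proof -
  obtain e where e: "e \<in> edges G" "ends G e = {x,a} \<or> ends G e = {u,a}"
    using assms(2) unfolding adjacent_def edges_between_def by blast
  have "ends G e \<noteq> {x,u}" using e(2) assms by (auto simp add: doubleton_eq_iff)
  then have "e \<notin> edges_between G x u" unfolding edges_between_def by blast
  moreover have "(\<lambda>y. if y = u then x else y) ` ends G e = {x,a}" using e(2) assms by (elim disjE) (auto simp: insert_commute)
  ultimately have "e \<in> edges_between (contract G x u) x a" using e
    unfolding eb_contract by (intro conjI)
  then show ?thesis unfolding adjacent_def by blast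
qed


lemma card_ge4_nbrs:
  assumes G: "multigraph G" and H: "multigraph H"
    and cm: "completely_multipartite G"
    and sv: "submultigraph_via H G \<phi> \<psi>"
    and ind: "\<forall>S. independent_set H S \<longrightarrow> int (card S) \<le> int (card (verts H)) - 4"
    and z: "z \<in> verts G"
  obtains N where "N \<subseteq> \<phi> ` verts H" "finite N" "card N \<ge> 4" "z \<notin> N" "\<forall>y\<in>N. adjacent G z y"
proof -
  obtain T where T: "T \<subseteq> verts H" "card T \<ge> 4" "\<forall>a\<in>T. adjacent G z (\<phi> a)"
    using nbrs[OF G H cm sv ind z] by blast
  have finH: "finite (verts H)" using H unfolding multigraph_def by auto
  have "inj_on \<phi> T" using sv T(1) unfolding submultigraph_via_def by (meson inj_on_subset)
  then have "card (\<phi> ` T) = card T" by (rule card_image)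
  moreover have "z \<notin> \<phi> ` T" using T(3) not_adj_self[OF G] by blast
  moreover have "finite (\<phi> ` T)" using T(1) finH by (meson finite_imageI finite_subset)
  ultimately show ?thesis using that[of "\<phi> ` T"] T by auto
qed

lemma step:
  assumes G: "multigraph G" and H: "multigraph H"
    and cm: "completely_multipartite G"
    and sv: "submultigraph_via H G \<phi> \<psi>"
    and wt2: "\<forall>v\<in>verts G. wt G v \<ge> 2"
    and ind: "\<forall>S. independent_set H S \<longrightarrow> int (card S) \<le> int (card (verts H)) - 4"
    and u: "u \<in> verts G" "u \<notin> \<phi> ` verts H"
  shows "\<exists>G'. adm_contraction G G' \<and> multigraph G' \<and> completely_multipartite G' \<and>
     submultigraph_via H G' \<phi> \<psi> \<and> (\<forall>v\<in>verts G'. wt G' v \<ge> 2) \<and> verts G' = verts G - {u}"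
proof -
  obtain Nu where Nu: "Nu \<subseteq> \<phi> ` verts H" "finite Nu" "card Nu \<ge> 4" "u \<notin> Nu" "\<forall>y\<in>Nu. adjacent G u y"
    using card_ge4_nbrs[OF G H cm sv ind u(1)] by blast
  from Nu(3) have "Nu \<noteq> {}" by auto
  then obtain x where x: "x \<in> Nu" by blast
  have imgG: "\<phi> ` verts H \<subseteq> verts G" using sv unfolding submultigraph_via_def by blast
  have xV: "x \<in> verts G" using x Nu(1) imgG by blast
  have xu: "x \<noteq> u" using x Nu(4) by blast
  have adjxu: "adjacent G x u" using Nu(5) x adj_sym[of G u x] by blast
  define m where "m = card (edges_between G x u)"
  have finE: "finite (edges G)" using G unfolding multigraph_def by blast
  have "finite (edges_between G x u)" using finE unfolding edges_between_def by simp
  then have m0: "m > 0" using adjxu unfolding m_def adjacent_def by (simp add: card_gt_0_iff)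
  have degy: "deg G y \<ge> 3" if yV: "y \<in> verts G" for y
  proof -
    obtain N where N: "N \<subseteq> \<phi> ` verts H" "finite N" "card N \<ge> 4" "y \<notin> N" "\<forall>z\<in>N. adjacent G y z"
      using card_ge4_nbrs[OF G H cm sv ind yV] by blast
    have "card (edges_between G y y) + card N \<le> deg G y" using deg_bound[OF G N(2) N(4) N(4) N(5)] .
    with N(3) show ?thesis by linarith
  qed
  have degx: "m + 3 \<le> deg G x"
  proof -
    obtain N where N: "N \<subseteq> \<phi> ` verts H" "finite N" "card N \<ge> 4" "x \<notin> N" "\<forall>z\<in>N. adjacent G x z"
      using card_ge4_nbrs[OF G H cm sv ind xV] by blast
    have "u \<notin> N" using N(1) u(2) by blast
    have "card (edges_between G x u) + card N \<le> deg G x" using deg_bound[OF G N(2) N(4) \<open>u \<notin> N\<close> N(5)] .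
    with N(3) show ?thesis unfolding m_def by linarith
  qed
  have degu: "m + 3 \<le> deg G u"
  proof -
    define N where "N = Nu - {x}"
    have "card N \<ge> 3" unfolding N_def using Nu(2,3) x by (simp add: card_Diff_singleton)
    have "card (edges_between G u x) + card N \<le> deg G u"
      using deg_bound[OF G _ _ _ ] Nu unfolding N_def by auto
    with \<open>card N \<ge> 3\<close> show ?thesis unfolding m_def eb_sym[of G x u] by linarith
  qed
  have adm: "admissible_labeled G x u"
    unfolding admissible_labeled_def Let_def
  proof (rule exI[of _ 0], intro conjI ballI impI)
    have "int m + 3 \<le> int (deg G x)" "int m + 3 \<le> int (deg G u)" using degx degu by linarith+
    moreover have "2 \<le> wt G x" "2 \<le> wt G u" using wt2 xV u(1) by blast+
    ultimately show "(0::int) \<le> 0" "0 < int (card (edges_between G x u))"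
      "wt G x \<ge> 0 + 1" "wt G u \<ge> 0 + 2"
      "3 \<le> int (deg G x) - int (card (edges_between G x u)) + 0"
      "3 \<le> int (deg G u) - int (card (edges_between G x u)) + 0"
      using m0 unfolding m_def by linarith+
    fix y assume "y \<in> verts G" "y \<notin> {x, u}"
    then show "3 \<le> deg G y" using degy by blast
  qed
  define G' where "G' = contract G x u"
  have AC: "adm_contraction G G'"
    unfolding adm_contraction_def G'_def admissible_pair_def using xV u(1) xu adjxu adm by blast
  let ?f = "\<lambda>y. if y = u then x else y"
  have MG': "multigraph G'"
    unfolding multigraph_def
  proof (intro conjI ballI)
    show "finite (verts G')" using G unfolding multigraph_def G'_def contract_simps by blast
    show "finite (edges G')" using finE unfolding G'_def contract_simps by blast
    fix e assume "e \<in> edges G'"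
    then have e: "e \<in> edges G" "e \<notin> edges_between G x u" unfolding G'_def contract_simps by blast+
    then obtain p q where pq: "p \<in> verts G" "q \<in> verts G" "p \<noteq> q" "ends G e = {p, q}"
      using G unfolding multigraph_def by blast
    have ne: "{p,q} \<noteq> {x,u}" using e pq(4) unfolding edges_between_def by blast
    have img: "ends G' e = {?f p, ?f q}" unfolding G'_def contract_simps pq(4) by simp
    have "?f p \<in> verts G'" "?f q \<in> verts G'" using pq xV xu unfolding G'_def contract_simps by auto
    moreover have "?f p \<noteq> ?f q" using pq(3) ne xu by (auto simp: doubleton_eq_iff)
    ultimately show "\<exists>a b. a \<in> verts G' \<and> b \<in> verts G' \<and> a \<noteq> b \<and> ends G' e = {a, b}"
      using img by blast
  qed
  have VG': "verts G' = verts G - {u}" unfolding G'_def contract_simps ..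
  have xall: "adjacent G' x b" if "b \<in> verts G'" "b \<noteq> x" for b
  proof -
    have b: "b \<notin> {x,u}" "b \<in> verts G" using that VG' by auto
    have "adjacent G x b \<or> adjacent G u b"
    proof (rule ccontr)
      assume "\<not> (adjacent G x b \<or> adjacent G u b)"
      then have "\<not> adjacent G b x" "\<not> adjacent G b u" using adj_sym[of G x b] adj_sym[of G u b] by blast+
      then show False using cm b(2) xV u(1) adjxu unfolding completely_multipartite_def by blast
    qed
    then show ?thesis unfolding G'_def using adj_contract_x[OF b(1) _ xu] by blast
  qed
  have CM': "completely_multipartite G'"
    unfolding completely_multipartite_def
  proof (intro notI, elim bexE conjE)
    fix v1 v2 v3 assume v: "v1 \<in> verts G'" "v2 \<in> verts G'" "v3 \<in> verts G'"
      and n12: "\<not> adjacent G' v1 v2" and n13: "\<not> adjacent G' v1 v3" and a23: "adjacent G' v2 v3"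
    have "v1 \<noteq> v2" using n13 a23 by auto
    have "v1 \<noteq> v3" using n12 a23 adj_sym[of G' v2 v3] by auto
    have "v1 \<noteq> x" using xall[OF v(2)] n12 \<open>v1 \<noteq> v2\<close> by auto
    moreover have "v2 \<noteq> x" using xall[OF v(1)] n12 \<open>v1 \<noteq> v2\<close> adj_sym[of G' v1 v2] by auto
    moreover have "v3 \<noteq> x" using xall[OF v(1)] n13 \<open>v1 \<noteq> v3\<close> adj_sym[of G' v1 v3] by auto
    ultimately have "v1 \<notin> {x,u}" "v2 \<notin> {x,u}" "v3 \<notin> {x,u}" using v VG' by auto
    then have "\<not> adjacent G v1 v2" "\<not> adjacent G v1 v3" "adjacent G v2 v3"
      using n12 n13 a23 adj_contract_other[of v1 x u v2 G] adj_contract_other[of v1 x u v3 G]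
        adj_contract_other[of v2 x u v3 G] unfolding G'_def by auto
    moreover have "v1 \<in> verts G" "v2 \<in> verts G" "v3 \<in> verts G" using v VG' by auto
    ultimately show False using cm unfolding completely_multipartite_def by blast
  qed
  have SV': "submultigraph_via H G' \<phi> \<psi>"
    unfolding submultigraph_via_def
  proof (intro conjI ballI)
    show "inj_on \<phi> (verts H)" "inj_on \<psi> (edges H)" using sv unfolding submultigraph_via_def by blast+
    show "\<phi> ` verts H \<subseteq> verts G'" using imgG u(2) VG' by blast
    have key: "\<psi> e \<in> edges G' \<and> ends G' (\<psi> e) = \<phi> ` ends H e" if eH: "e \<in> edges H" for e
    proof -
      have pe: "\<psi> e \<in> edges G" "ends G (\<psi> e) = \<phi> ` ends H e" using sv eH unfolding submultigraph_via_def by blast+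
      have "ends H e \<subseteq> verts H" using H eH unfolding multigraph_def by force
      then have usub: "u \<notin> \<phi> ` ends H e" using u(2) by blast
      then have "ends G (\<psi> e) \<noteq> {x,u}" using pe(2) by blast
      then have "\<psi> e \<notin> edges_between G x u" unfolding edges_between_def by blast
      then have "\<psi> e \<in> edges G'" using pe(1) unfolding G'_def contract_simps by blast
      moreover have "ends G' (\<psi> e) = \<phi> ` ends H e" unfolding G'_def contract_simps pe(2) using usub by (rule img_id)
      ultimately show ?thesis by blast
    qed
    show "\<psi> ` edges H \<subseteq> edges G'" using key by blast
    fix e assume "e \<in> edges H"
    then show "ends G' (\<psi> e) = \<phi> ` ends H e" using key by blast
  next
    fix v assume vH: "v \<in> verts H"
    have "wt H v \<le> wt G (\<phi> v)" using sv vH unfolding submultigraph_via_def by blast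
    moreover have "wt G u \<ge> 2" using wt2 u(1) by blast
    ultimately show "wt H v \<le> wt G' (\<phi> v)" unfolding G'_def contract_simps by auto
  qed
  have W': "\<forall>v\<in>verts G'. wt G' v \<ge> 2"
  proof
    fix v assume "v \<in> verts G'"
    then have "v \<in> verts G" using VG' by blast
    then have a: "wt G v \<ge> 2" using wt2 by blast
    have b: "wt G u \<ge> 2" using wt2 u(1) by blast
    show "wt G' v \<ge> 2" unfolding G'_def contract_simps using a b by (cases "v = x") simp_all
  qed
  show ?thesis using AC MG' CM' SV' W' VG' by blast
qed


lemma main_ind:
  assumes H: "multigraph H"
    and ind: "\<forall>S. independent_set H S \<longrightarrow> int (card S) \<le> int (card (verts H)) - 4"
  shows "multigraph G \<Longrightarrow> completely_multipartite G \<Longrightarrow> submultigraph_via H G \<phi> \<psi> \<Longrightarrow>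
    \<forall>v\<in>verts G. wt G v \<ge> 2 \<Longrightarrow> card (verts G - \<phi> ` verts H) = n \<Longrightarrow>
    \<exists>G'. adm_contraction\<^sup>*\<^sup>* G G' \<and> spanning_submultigraph H G'"
proof (induction n arbitrary: G)
  case 0
  have fin: "finite (verts G)" using "0.prems"(1) unfolding multigraph_def by blast
  have sub: "\<phi> ` verts H \<subseteq> verts G" "inj_on \<phi> (verts H)"
    using "0.prems"(3) unfolding submultigraph_via_def by blast+
  have "verts G - \<phi> ` verts H = {}" using "0.prems"(5) fin by simp
  then have "\<phi> ` verts H = verts G" using sub by blast
  then have "bij_betw \<phi> (verts H) (verts G)" using sub(2) unfolding bij_betw_def by blast
  then have "spanning_submultigraph H G" unfolding spanning_submultigraph_def using "0.prems"(3) by blast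
  then show ?case by blast
next
  case (Suc n)
  have "verts G - \<phi> ` verts H \<noteq> {}" using Suc.prems(5) by (metis card.empty nat.distinct(1))
  then obtain u where u: "u \<in> verts G" "u \<notin> \<phi> ` verts H" by blast
  obtain G1 where G1: "adm_contraction G G1" "multigraph G1" "completely_multipartite G1"
    "submultigraph_via H G1 \<phi> \<psi>" "\<forall>v\<in>verts G1. wt G1 v \<ge> 2" "verts G1 = verts G - {u}"
    using step[OF Suc.prems(1) H Suc.prems(2) Suc.prems(3) Suc.prems(4) ind u] by blast
  have "verts G1 - \<phi> ` verts H = (verts G - \<phi> ` verts H) - {u}" using G1(6) by blast
  then have "card (verts G1 - \<phi> ` verts H) = n" using Suc.prems(5) u by simp
  then obtain G' where "adm_contraction\<^sup>*\<^sup>* G1 G'" "spanning_submultigraph H G'"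
    using Suc.IH[OF G1(2) G1(3) G1(4) G1(5)] by blast
  then show ?case using G1(1) by (meson converse_rtranclp_into_rtranclp)
qed

theorem lemma3p6:
  fixes G :: "('v, 'e) vwmg" and H :: "('a, 'b) vwmg"
  assumes "multigraph G" and "multigraph H"
    and "submultigraph H G"
    and "completely_multipartite G"
    and "\<forall>v\<in>verts G. wt G v \<ge> 2"
    and "\<forall>S. independent_set H S \<longrightarrow> int (card S) \<le> int (card (verts H)) - 4"
  shows "\<exists>G'. adm_contraction\<^sup>*\<^sup>* G G' \<and> spanning_submultigraph H G'"
proof -
  obtain \<phi> \<psi> where "submultigraph_via H G \<phi> \<psi>" using assms(3) unfolding submultigraph_def by blast
  then show ?thesis using main_ind[OF assms(2) assms(6) assms(1) assms(4) _ assms(5) refl] by blast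
qed
end
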